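(* Let $\alpha_N,\alpha_B$ be distinct nonzero real numbers with $\alpha_B=-\alpha_N$, and let $0<t_0\le1$ be fixed. Put $T=3+t_0^2$ and, for $\theta\in[-\pi,\pi]^2$, $F=1+e^{i\theta_1}+e^{i\theta_2}$. Consider $$M(\eta,\theta)=\begin{pmatrix}-T\eta-\alpha_N&\bar F&0&t_0^2\\ F&-T\eta-\alpha_B&t_0^2&0\\ 0&t_0^2&-T\eta&\bar F\\ t_0^2&0&F&-T\eta\end{pmatrix}.$$ Then the dispersion relation obtained from the hBN–graphene bilayer stacking (the root branches $\eta$ of $\det M(\eta,\theta)=0$) always has a gap at $F=0$, i.e. no two branches touch at $F=0$.
   Context: This models a two-layer heterostructure as a periodic Schrödinger quantum graph (edges of length 1, even continuous potential $q_0$): a lower hexagonal layer with two alternating atom types (parameters $\delta_N$ at type-$A$ and $\delta_B$ at type-$B$ vertices, modelling hexagonal boron nitride) and an upper hexagonal layer with one atom type (parameter $\delta_C$, modelling graphene), joined by vertical edges with weak coupling $t_0$ and modified Neumann vertex conditions $u_{a_1}(v)=u_{a_2}(v)=u_f(v)/t_0$, $\sum_a u_a'(v)\pm\sum_f t_0u_f'(v)=\delta_vu(v)$. For $\lambda$ outside the Dirichlet spectrum, with $\varphi_0,\varphi_1$ solutions of $-\varphi''+q_0\varphi=\lambda\varphi$ with $\varphi_0(0)=1,\varphi_0(1)=0,\varphi_1(0)=0,\varphi_1(1)=1$, set $\eta=\varphi_1'(1)/\varphi_1'(0)$, $\alpha_k=\delta_k/\varphi_1'(0)$ (treated as constants),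 and the carbon parameter is taken $\alpha_C=0$. $\lambda$ lies in the spectrum iff $\det M(\eta(\lambda),\theta)=0$ for some $\theta$; the dispersion relation is identified with the root branches $\eta$ as functions of $F$. *)

theory Defs
  imports Complex_Main "Jordan_Normal_Form.Determinant"
begin

definition Fq :: "real \<Rightarrow> real \<Rightarrow> complex" where
  "Fq th1 th2 = 1 + cis th1 + cis th2"

definition Mbil :: "real \<Rightarrow> real \<Rightarrow> real \<Rightarrow> real \<Rightarrow> real \<Rightarrow> real \<Rightarrow> complex mat" where
  "Mbil aN aB t0 eta th1 th2 =
     (let T = 3 + t0\<^sup>2; F = Fq th1 th2; s = complex_of_real (t0\<^sup>2);
          d = complex_of_real (- T * eta) in
      mat_of_rows_list 4
       [[d - complex_of_real aN, cnj F, 0, s],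
        [F, d - complex_of_real aB, s, 0],
        [0, s, d, cnj F],
        [s, 0, F, d]])"

end

theory Submission
  imports Defs
begin

lemma md_idx: "k < dim_row A - 1 \<Longrightarrow> l < dim_col A - 1 \<Longrightarrow>
  mat_delete A i j $$ (k,l) = A $$ (if k<i then k else Suc k, if l<j then l else Suc l)"
  by (simp add: mat_delete_def)
lemma det2: assumes "dim_row (A :: 'a :: comm_ring_1 mat) = 2" "dim_col A = 2"
  shows "det A = A$$(0,0)*A$$(1,1) - A$$(0,1)*A$$(1,0)"
proof -
  have c: "A \<in> carrier_mat 2 2" using assms by auto
  have "det A = (\<Sum>j<2. A $$ (0,j) * cofactor A 0 j)" by (rule laplace_expansion_row[OF c], simp)
  also have "\<dots> = A$$(0,0)*A$$(1,1) - A$$(0,1)*A$$(1,0)"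
    using assms by (simp add: numeral_2_eq_2 cofactor_def det_single mat_delete_def)
  finally show ?thesis .
qed
lemma det3: assumes "dim_row (A :: 'a :: comm_ring_1 mat) = 3" "dim_col A = 3"
  shows "det A = A$$(0,0)*(A$$(1,1)*A$$(2,2) - A$$(1,2)*A$$(2,1))
   - A$$(0,1)*(A$$(1,0)*A$$(2,2) - A$$(1,2)*A$$(2,0))
   + A$$(0,2)*(A$$(1,0)*A$$(2,1) - A$$(1,1)*A$$(2,0))"
proof -
  have c: "A \<in> carrier_mat 3 3" using assms by auto
  have "det A = (\<Sum>j<3. A $$ (0,j) * cofactor A 0 j)" by (rule laplace_expansion_row[OF c], simp)
  also have "\<dots> = A$$(0,0)*det (mat_delete A 0 0) - A$$(0,1)*det (mat_delete A 0 1) + A$$(0,2)*det (mat_delete A 0 2)"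
    by (simp add: lessThan_nat_numeral cofactor_def)
  finally show ?thesis
    using assms by (simp add: det2 md_idx numeral_2_eq_2)
qed
lemma det4: assumes "dim_row (A :: 'a :: comm_ring_1 mat) = 4" "dim_col A = 4"
  shows "det A = A$$(0,0)*det (mat_delete A 0 0) - A$$(0,1)*det (mat_delete A 0 1) + A$$(0,2)*det (mat_delete A 0 2) - A$$(0,3)*det (mat_delete A 0 3)"
proof -
  have c: "A \<in> carrier_mat 4 4" using assms by auto
  have "det A = (\<Sum>j<4. A $$ (0,j) * cofactor A 0 j)" by (rule laplace_expansion_row[OF c], simp)
  then show ?thesis by (simp add: lessThan_nat_numeral cofactor_def)
qed

lemma det_special: "det (mat_of_rows_list 4 [[a,0,0,s],[0,b,s,0],[0,s,x,0],[s,0,0,x::complex]]) = (x*a - s^2)*(x*b-s^2)"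
  apply (subst det4)
    apply (simp_all add: mat_of_rows_list_def)
  apply (simp add: det3 md_idx)
  apply (simp add: algebra_simps power2_eq_square)
  done

lemma quad_roots:
  fixes d a s r :: real
  assumes "r^2 = a^2 + 4*s^2"
  shows "d*(d-a) = s^2 \<longleftrightarrow> d = (a+r)/2 \<or> d = (a-r)/2"
proof -
  have "d*(d-a) - s^2 = (d-(a+r)/2)*(d-(a-r)/2)"
    using assms by (simp add: algebra_simps power2_eq_square field_simps) 
  then show ?thesis by (smt (verit, best) mult_eq_0_iff)
qed

theorem mainTheorem5:
  fixes aN aB t0 th1 th2 :: real
  assumes "aN \<noteq> 0" and "aB \<noteq> 0" and "aN \<noteq> aB" and "aB = - aN"
    and "0 < t0" and "t0 \<le> 1"
    and "th1 \<in> {-pi..pi}" and "th2 \<in> {-pi..pi}"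
    and "Fq th1 th2 = 0"
  shows "card {eta :: real. det (Mbil aN aB t0 eta th1 th2) = 0} = 4"
proof -
  define a where "a = aN"
  define s where "s = t0^2"
  define T where "T = 3 + t0^2"
  define r where "r = sqrt (a^2 + 4*s^2)"
  have a0: "a \<noteq> 0" using assms a_def by simp
  have s0: "s > 0" using assms s_def by simp
  have T0: "T > 0" using T_def by (simp add: add_pos_nonneg)
  have r2: "r^2 = a^2 + 4*s^2" unfolding r_def by (simp add: add_nonneg_nonneg)
  have r0: "r \<ge> 0" unfolding r_def by simp
  have rgt: "r > \<bar>a\<bar>"
  proof -
    have "\<bar>a\<bar>^2 < r^2" using r2 s0 by simp
    then show ?thesis using r0 by (smt (verit) power_mono)
  qed
  have detEq: "det (Mbil aN aB t0 eta th1 th2) =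
     complex_of_real (((-T*eta)*((-T*eta)-a) - s^2)*((-T*eta)*((-T*eta)+a) - s^2))" for eta
    unfolding Mbil_def Let_def assms(9) complex_cnj_zero
    using det_special[of "complex_of_real (- (3 + t0\<^sup>2) * eta) - complex_of_real aN"
       "complex_of_real (t0^2)" "complex_of_real (- (3 + t0\<^sup>2) * eta) - complex_of_real aB"
       "complex_of_real (- (3 + t0\<^sup>2) * eta)"]
    by (simp add: assms(4) a_def s_def T_def algebra_simps)
  have iff: "det (Mbil aN aB t0 eta th1 th2) = 0 \<longleftrightarrow>
     eta \<in> {-(a+r)/(2*T), -(a-r)/(2*T), -(-a+r)/(2*T), -(-a-r)/(2*T)}" for eta
  proof -
    define d where "d = -T*eta"
    have e: "eta = -d/T" using T0 d_def by simp
    have "det (Mbil aN aB t0 eta th1 th2) = 0 \<longleftrightarrow> d*(d-a) = s^2 \<or> d*(d-(-a)) = s^2"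
      unfolding detEq of_real_eq_0_iff mult_eq_0_iff d_def by auto
    also have "\<dots> \<longleftrightarrow> d = (a+r)/2 \<or> d = (a-r)/2 \<or> d = (-a+r)/2 \<or> d = (-a-r)/2"
      using quad_roots[OF r2] quad_roots[of r "-a" s] r2 by auto
    also have "\<dots> \<longleftrightarrow> eta \<in> {-(a+r)/(2*T), -(a-r)/(2*T), -(-a+r)/(2*T), -(-a-r)/(2*T)}"
      unfolding e using T0 by (auto simp: field_simps)
    finally show ?thesis .
  qed
  have "{eta :: real. det (Mbil aN aB t0 eta th1 th2) = 0} = {-(a+r)/(2*T), -(a-r)/(2*T), -(-a+r)/(2*T), -(-a-r)/(2*T)}"
    using iff by blast
  moreover have "card {-(a+r)/(2*T), -(a-r)/(2*T), -(-a+r)/(2*T), -(-a-r)/(2*T)} = 4"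
  proof -
    have T2: "2*T \<noteq> 0" using T0 by simp
    have "distinct [-(a+r)/(2*T), -(a-r)/(2*T), -(-a+r)/(2*T), -(-a-r)/(2*T)]"
    proof -
      have eqd: "x/(2*T) = y/(2*T) \<longleftrightarrow> x = y" for x y using T2 by simp
      show ?thesis unfolding distinct.simps set_simps eqd insert_iff empty_iff
        using a0 rgt by (simp only: simp_thms) (smt (verit))
    qed
    from distinct_card[OF this] show ?thesis by simp
  qed
  ultimately show ?thesis by simp
qed

end
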